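(* If $X$ is a metric space, then $e(X\ast I)=e(X)$.
   Context: Let $I=\mathbb R_{\ge0}\times\mathbb R_{\ge0}$ with the Manhattan metric $d((s_1,t_1),(s_2,t_2))=|s_1-s_2|+|t_1-t_2|$. For a metric space $X$ with base point $x_0$, the asymptotic product is $X\ast I=\{(x,i)\in X\times I: d(x,x_0)=d(i,(0,0))\}$ with the metric $d((x,i),(y,j))=d(x,y)+d(i,j)$. A subset is bounded if it has finite diameter. Finitely many pairwise disjoint subsets $U_1,\dots,U_n$ of a metric space $Z$ with union $Z$ form a coarse disjoint union of $Z$ if for every $R\ge0$ and every $i\ne j$ the set $\{z:d(z,U_i)\le R\}\cap\{z:d(z,U_j)\le R\}$ is bounded. The number of ends $e(Z)$ is $0$ if $Z$ is bounded and otherwise the supremum (possibly $\infty$) of those $n$ for which $Z$ is a coarse disjoint union of $n$ unbounded subsets. *)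

theory Defs
  imports "HOL-Analysis.Analysis"
begin

definition bdd_diam :: "('a \<Rightarrow> 'a \<Rightarrow> real) \<Rightarrow> 'a set \<Rightarrow> bool" where
  "bdd_diam d S \<longleftrightarrow> (\<exists>B. \<forall>x\<in>S. \<forall>y\<in>S. d x y \<le> B)"

text \<open>d(z,U) \<le> R, with d(z,U) the infimum of d(z,u) over u in U (infinite for empty U).\<close>
definition setdist_le :: "('a \<Rightarrow> 'a \<Rightarrow> real) \<Rightarrow> 'a \<Rightarrow> 'a set \<Rightarrow> real \<Rightarrow> bool" where
  "setdist_le d z U R \<longleftrightarrow> (\<forall>e>0. \<exists>u\<in>U. d z u < R + e)"

definition coarse_disjoint_union ::
  "'a set \<Rightarrow> ('a \<Rightarrow> 'a \<Rightarrow> real) \<Rightarrow> nat \<Rightarrow> (nat \<Rightarrow> 'a set) \<Rightarrow> bool" where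
  "coarse_disjoint_union Z d n U \<longleftrightarrow>
     (\<forall>i<n. \<forall>j<n. i \<noteq> j \<longrightarrow> U i \<inter> U j = {}) \<and>
     (\<Union>i<n. U i) = Z \<and>
     (\<forall>R\<ge>0. \<forall>i<n. \<forall>j<n. i \<noteq> j \<longrightarrow>
        bdd_diam d {z\<in>Z. setdist_le d z (U i) R \<and> setdist_le d z (U j) R})"

definition ends :: "'a set \<Rightarrow> ('a \<Rightarrow> 'a \<Rightarrow> real) \<Rightarrow> enat" where
  "ends Z d = (if bdd_diam d Z then 0
     else Sup {enat n | n. \<exists>U. coarse_disjoint_union Z d n U \<and> (\<forall>i<n. \<not> bdd_diam d (U i))})"

text \<open>The asymptotic product X * I, I = quadrant with Manhattan metric.\<close>
definition asym_prod :: "'a set \<Rightarrow> ('a \<Rightarrow> 'a \<Rightarrow> real) \<Rightarrow> 'a \<Rightarrow> ('a \<times> (real \<times> real)) set" where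
  "asym_prod X d x0 = {(x, (s, t)). x \<in> X \<and> 0 \<le> s \<and> 0 \<le> t \<and> d x x0 = \<bar>s - 0\<bar> + \<bar>t - 0\<bar>}"

definition asym_dist :: "('a \<Rightarrow> 'a \<Rightarrow> real) \<Rightarrow> ('a \<times> (real \<times> real)) \<Rightarrow> ('a \<times> (real \<times> real)) \<Rightarrow> real" where
  "asym_dist d p q = d (fst p) (fst q) + (\<bar>fst (snd p) - fst (snd q)\<bar> + \<bar>snd (snd p) - snd (snd q)\<bar>)"

end

theory Submission imports Defs begin

lemma bdd_diam_mono: "bdd_diam d S \<Longrightarrow> T \<subseteq> S \<Longrightarrow> bdd_diam d T"
  unfolding bdd_diam_def by blast

lemma cdu_cover: "coarse_disjoint_union Z d n U \<Longrightarrow> (\<Union>i<n. U i) = Z"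
  unfolding coarse_disjoint_union_def by (elim conjE)

lemma cdu_disj: "coarse_disjoint_union Z d n U \<Longrightarrow> i < n \<Longrightarrow> j < n \<Longrightarrow> i \<noteq> j \<Longrightarrow> U i \<inter> U j = {}"
  unfolding coarse_disjoint_union_def by (elim conjE) blast

lemma cdu_bdd: "coarse_disjoint_union Z d n U \<Longrightarrow> 0 \<le> R \<Longrightarrow> i < n \<Longrightarrow> j < n \<Longrightarrow> i \<noteq> j \<Longrightarrow>
   bdd_diam d {z\<in>Z. setdist_le d z (U i) R \<and> setdist_le d z (U j) R}"
  unfolding coarse_disjoint_union_def by (elim conjE) blast

locale AP = Metric_space X d for X and d :: "'a \<Rightarrow> 'a \<Rightarrow> real" +
  fixes x0 assumes x0: "x0 \<in> X"
begin

abbreviation "Z \<equiv> asym_prod X d x0"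
abbreviation "D \<equiv> asym_dist d"
definition sig where "sig x = (x, (d x x0, 0::real))"

lemma Z_iff: "(x, (s, t)) \<in> Z \<longleftrightarrow> x \<in> X \<and> 0 \<le> s \<and> 0 \<le> t \<and> d x x0 = s + t"
  unfolding asym_prod_def by auto

lemma Z_mem: "z \<in> Z \<Longrightarrow> fst z \<in> X \<and> 0 \<le> fst (snd z) \<and> 0 \<le> snd (snd z) \<and> d (fst z) x0 = fst (snd z) + snd (snd z)"
  by (cases z) (auto simp: Z_iff)

lemma sig_Z: "x \<in> X \<Longrightarrow> sig x \<in> Z"
  by (simp add: sig_def Z_iff)

lemma sig_ge: "d x y \<le> D (sig x) (sig y)"
  by (simp add: sig_def asym_dist_def)

lemma sig_le: "x \<in> X \<Longrightarrow> y \<in> X \<Longrightarrow> D (sig x) (sig y) \<le> 2 * d x y"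
proof -
  assume a: "x \<in> X" "y \<in> X"
  have "d x x0 \<le> d x y + d y x0" "d y x0 \<le> d y x + d x x0"
    using a x0 triangle by blast+
  then show ?thesis using commute[of x y] by (simp add: sig_def asym_dist_def abs_le_iff)
qed

lemma D_ge: "d (fst z) (fst w) \<le> D z w"
  by (simp add: asym_dist_def)

lemma D_r: "z \<in> Z \<Longrightarrow> w \<in> Z \<Longrightarrow> \<bar>d (fst z) x0 - d (fst w) x0\<bar> \<le> D z w"
proof -
  assume a: "z \<in> Z" "w \<in> Z"
  have "\<bar>(fst (snd z) + snd (snd z)) - (fst (snd w) + snd (snd w))\<bar> \<le> \<bar>fst (snd z) - fst (snd w)\<bar> + \<bar>snd (snd z) - snd (snd w)\<bar>"
    by arith
  moreover have "0 \<le> d (fst z) (fst w)" by simp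
  ultimately show ?thesis using Z_mem[OF a(1)] Z_mem[OF a(2)] unfolding asym_dist_def by linarith
qed

lemma bdd_rbdd: "bdd_diam D S \<Longrightarrow> S \<subseteq> Z \<Longrightarrow> \<exists>M. \<forall>z\<in>S. d (fst z) x0 \<le> M"
proof (cases "S = {}")
  case False
  assume b: "bdd_diam D S" and s: "S \<subseteq> Z"
  obtain C where C: "\<forall>x\<in>S. \<forall>y\<in>S. D x y \<le> C" using b unfolding bdd_diam_def by blast
  obtain b0 where b0: "b0 \<in> S" using False by blast
  show ?thesis
  proof (intro exI ballI)
    fix z assume z: "z \<in> S"
    have "\<bar>d (fst z) x0 - d (fst b0) x0\<bar> \<le> D z b0" using D_r s z b0 by blast
    then show "d (fst z) x0 \<le> C + d (fst b0) x0" using C z b0 by force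
  qed
qed simp

lemma rbdd_bdd: assumes "S \<subseteq> Z" "\<forall>z\<in>S. d (fst z) x0 \<le> M" shows "bdd_diam D S"
  unfolding bdd_diam_def
proof (intro exI ballI)
  fix z w assume zw: "z \<in> S" "w \<in> S"
  have z: "fst z \<in> X" "0 \<le> fst (snd z)" "0 \<le> snd (snd z)" "d (fst z) x0 = fst (snd z) + snd (snd z)"
    using Z_mem[of z] assms zw by auto
  have w: "fst w \<in> X" "0 \<le> fst (snd w)" "0 \<le> snd (snd w)" "d (fst w) x0 = fst (snd w) + snd (snd w)"
    using Z_mem[of w] assms zw by auto
  have "d (fst z) (fst w) \<le> d (fst z) x0 + d x0 (fst w)" using triangle z w x0 by blast
  moreover have "d x0 (fst w) = d (fst w) x0" by (rule commute)
  moreover have "d (fst z) x0 \<le> M" "d (fst w) x0 \<le> M" using assms zw by auto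
  ultimately show "D z w \<le> 4 * M" using z w unfolding asym_dist_def by (simp add: abs_le_iff)
qed

lemma B1: assumes "bdd_diam d B" "B \<subseteq> X" shows "bdd_diam D {z\<in>Z. fst z \<in> B}"
proof (cases "B = {}")
  case True then show ?thesis by (simp add: bdd_diam_def)
next
  case False
  obtain C where C: "\<forall>x\<in>B. \<forall>y\<in>B. d x y \<le> C" using assms unfolding bdd_diam_def by blast
  obtain b0 where b0: "b0 \<in> B" using False by blast
  show ?thesis
  proof (rule rbdd_bdd)
    show "\<forall>z\<in>{z \<in> Z. fst z \<in> B}. d (fst z) x0 \<le> C + d b0 x0"
    proof
      fix z assume "z \<in> {z \<in> Z. fst z \<in> B}"
      then have "fst z \<in> B" by auto
      then have "d (fst z) x0 \<le> d (fst z) b0 + d b0 x0" "d (fst z) b0 \<le> C"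
        using triangle assms(2) b0 x0 C by blast+
      then show "d (fst z) x0 \<le> C + d b0 x0" by simp
    qed
  qed auto
qed

lemma B2: "bdd_diam D B \<Longrightarrow> bdd_diam d {x\<in>X. sig x \<in> B}"
proof -
  assume "bdd_diam D B"
  then obtain C where C: "\<forall>x\<in>B. \<forall>y\<in>B. D x y \<le> C" unfolding bdd_diam_def by blast
  have "\<forall>x\<in>{x\<in>X. sig x \<in> B}. \<forall>y\<in>{x\<in>X. sig x \<in> B}. d x y \<le> C"
  proof (intro ballI)
    fix x y assume "x \<in> {x\<in>X. sig x \<in> B}" "y \<in> {x\<in>X. sig x \<in> B}"
    then have "D (sig x) (sig y) \<le> C" using C by blast
    then show "d x y \<le> C" using sig_ge[of x y] by linarith
  qed
  then show ?thesis unfolding bdd_diam_def by blast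
qed

lemma U1: assumes "\<not> bdd_diam d U" "U \<subseteq> X" shows "\<not> bdd_diam D {z\<in>Z. fst z \<in> U}"
proof
  assume "bdd_diam D {z\<in>Z. fst z \<in> U}"
  then obtain C where C: "\<forall>x\<in>{z\<in>Z. fst z \<in> U}. \<forall>y\<in>{z\<in>Z. fst z \<in> U}. D x y \<le> C"
    unfolding bdd_diam_def by blast
  have "\<forall>x\<in>U. \<forall>y\<in>U. d x y \<le> C"
  proof (intro ballI)
    fix x y assume "x \<in> U" "y \<in> U"
    then have "sig x \<in> {z\<in>Z. fst z \<in> U}" "sig y \<in> {z\<in>Z. fst z \<in> U}"
      using sig_Z assms(2) by (auto simp: sig_def)
    then show "d x y \<le> C" using C sig_ge order_trans by blast
  qed
  then show False using assms(1) unfolding bdd_diam_def by blast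
qed

lemma forward:
  assumes cdu: "coarse_disjoint_union X d n U" and ub: "\<forall>i<n. \<not> bdd_diam d (U i)"
  shows "\<exists>V. coarse_disjoint_union Z D n V \<and> (\<forall>i<n. \<not> bdd_diam D (V i))"
proof -
  define V where "V i = {z\<in>Z. fst z \<in> U i}" for i
  have UX: "U i \<subseteq> X" if "i < n" for i using cdu that unfolding coarse_disjoint_union_def by blast
  have "coarse_disjoint_union Z D n V"
    unfolding coarse_disjoint_union_def
  proof (intro conjI allI impI)
    fix i j assume "i < n" "j < n" "i \<noteq> j"
    then show "V i \<inter> V j = {}" using cdu unfolding coarse_disjoint_union_def V_def by blast
  next
    show "(\<Union>i<n. V i) = Z"
    proof
      show "(\<Union>i<n. V i) \<subseteq> Z" unfolding V_def by blast
      show "Z \<subseteq> (\<Union>i<n. V i)"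
      proof
        fix z assume "z \<in> Z"
        then have "fst z \<in> (\<Union>i<n. U i)" using Z_mem cdu unfolding coarse_disjoint_union_def by blast
        then show "z \<in> (\<Union>i<n. V i)" using \<open>z \<in> Z\<close> unfolding V_def by blast
      qed
    qed
  next
    fix R :: real and i j assume R: "0 \<le> R" and ij: "i < n" "j < n" "i \<noteq> j"
    let ?S = "{x\<in>X. setdist_le d x (U i) R \<and> setdist_le d x (U j) R}"
    have bS: "bdd_diam d ?S" using cdu R ij unfolding coarse_disjoint_union_def by blast
    have tr: "setdist_le d (fst z) (U k) R" if sdl: "setdist_le D z (V k) R" for z k
      unfolding setdist_le_def
    proof (intro allI impI)
      fix e :: real assume "0 < e"
      then obtain u where "u \<in> V k" "D z u < R + e" using sdl unfolding setdist_le_def by blast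
      then have "fst u \<in> U k" "d (fst z) (fst u) < R + e" using D_ge[of z u] unfolding V_def by auto
      then show "\<exists>u\<in>U k. d (fst z) u < R + e" by blast
    qed
    have "{z\<in>Z. setdist_le D z (V i) R \<and> setdist_le D z (V j) R} \<subseteq> {z\<in>Z. fst z \<in> ?S}"
      using tr Z_mem by blast
    then show "bdd_diam D {z\<in>Z. setdist_le D z (V i) R \<and> setdist_le D z (V j) R}"
      using B1[OF bS] bdd_diam_mono by blast
  qed
  moreover have "\<forall>i<n. \<not> bdd_diam D (V i)" using U1 ub UX unfolding V_def by blast
  ultimately show ?thesis by blast
qed


lemma key:
  assumes cdu: "coarse_disjoint_union Z D n V" and i: "i < n"
    and Mb: "\<forall>j<n. j \<noteq> i \<longrightarrow> (\<forall>z\<in>{z\<in>Z. setdist_le D z (V i) 1 \<and> setdist_le D z (V j) 1}. d (fst z) x0 \<le> M)"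
    and z: "z \<in> V i" and zM: "d (fst z) x0 > M"
  shows "sig (fst z) \<in> V i"
proof -
  have cover: "(\<Union>i<n. V i) = Z" using cdu unfolding coarse_disjoint_union_def by blast
  then have zZ: "z \<in> Z" using z i by blast
  obtain x s t where zst: "z = (x, s, t)" by (cases z) auto
  have xX: "x \<in> X" and s0: "0 \<le> s" and t0: "0 \<le> t" and r: "d x x0 = s + t"
    using zZ zst by (auto simp: Z_iff)
  define N where "N = nat \<lceil>2 * (s + t)\<rceil> + 1"
  have Npos: "0 < N" unfolding N_def by simp
  have N2: "2 * t \<le> real N"
  proof -
    have a: "2*(s+t) \<le> of_int \<lceil>2*(s+t)\<rceil>" by (rule le_of_int_ceiling)
    have "0 \<le> \<lceil>2*(s+t)\<rceil>" using s0 t0 by simp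
    then have "(of_int \<lceil>2*(s+t)\<rceil> :: real) = real (nat \<lceil>2*(s+t)\<rceil>)" by simp
    then show ?thesis using a s0 unfolding N_def by simp
  qed
  define h where "h = t / real N"
  have h0: "0 \<le> h" unfolding h_def using t0 by simp
  have h1: "2 * h \<le> 1" unfolding h_def using Npos N2 by (simp add: field_simps)
  define w where "w k = (x, s + real k * h, t - real k * h)" for k :: nat
  have wZ: "w k \<in> Z" if "k \<le> N" for k
  proof -
    have "real k * h \<le> real N * h" using that h0 by (simp add: mult_right_mono)
    also have "\<dots> = t" unfolding h_def using Npos by simp
    finally show ?thesis unfolding w_def Z_iff using xX s0 h0 r by simp
  qed
  have wD: "D (w (Suc k)) (w k) \<le> 1" for k
  proof -
    have "D (w (Suc k)) (w k) = 2 * h" unfolding w_def asym_dist_def using xX h0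
      by (simp add: algebra_simps)
    then show ?thesis using h1 by simp
  qed
  have "\<forall>k\<le>N. w k \<in> V i"
  proof (intro allI)
    fix k show "k \<le> N \<longrightarrow> w k \<in> V i"
    proof (induction k)
      case 0 then show ?case using z zst unfolding w_def by simp
    next
      case (Suc k)
      show ?case
      proof
        assume kN: "Suc k \<le> N"
        then have wk: "w k \<in> V i" using Suc by simp
        have wsZ: "w (Suc k) \<in> Z" using wZ kN by blast
        then obtain j where j: "j < n" "w (Suc k) \<in> V j" using cover by blast
        show "w (Suc k) \<in> V i"
        proof (rule ccontr)
          assume "w (Suc k) \<notin> V i"
          then have ji: "j \<noteq> i" using j by blast
          have "setdist_le D (w (Suc k)) (V i) 1" unfolding setdist_le_def
          proof (intro allI impI)
            fix e :: real assume "0 < e"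
            then have "D (w (Suc k)) (w k) < 1 + e" using wD[of k] by linarith
            then show "\<exists>u\<in>V i. D (w (Suc k)) u < 1 + e" using wk by blast
          qed
          moreover have "setdist_le D (w (Suc k)) (V j) 1" unfolding setdist_le_def
          proof (intro allI impI)
            fix e :: real assume "0 < e"
            have "D (w (Suc k)) (w (Suc k)) = 0" unfolding w_def asym_dist_def using xX by simp
            then show "\<exists>u\<in>V j. D (w (Suc k)) u < 1 + e" using j \<open>0 < e\<close> by force
          qed
          ultimately have "d (fst (w (Suc k))) x0 \<le> M" using Mb j ji wsZ by blast
          then show False using zM zst unfolding w_def by simp
        qed
      qed
    qed
  qed
  then have "w N \<in> V i" by simp
  moreover have "w N = sig (fst z)" unfolding w_def sig_def h_def using zst r Npos by simp
  ultimately show ?thesis by simp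
qed

lemma U2:
  assumes cdu: "coarse_disjoint_union Z D n V" and i: "i < n" and ub: "\<not> bdd_diam D (V i)"
  shows "\<not> bdd_diam d {x\<in>X. sig x \<in> V i}"
proof -
  have cover: "(\<Union>i<n. V i) = Z" using cdu unfolding coarse_disjoint_union_def by blast
  then have ViZ: "V i \<subseteq> Z" using i by blast
  let ?B = "\<lambda>j. {z\<in>Z. setdist_le D z (V i) 1 \<and> setdist_le D z (V j) 1}"
  have "\<forall>j. \<exists>M. j < n \<and> j \<noteq> i \<longrightarrow> (\<forall>z\<in>?B j. d (fst z) x0 \<le> M)"
  proof
    fix j
    show "\<exists>M. j < n \<and> j \<noteq> i \<longrightarrow> (\<forall>z\<in>?B j. d (fst z) x0 \<le> M)"
    proof (cases "j < n \<and> j \<noteq> i")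
      case True
      have "\<forall>R\<ge>0. \<forall>i<n. \<forall>j<n. i \<noteq> j \<longrightarrow>
        bdd_diam D {z\<in>Z. setdist_le D z (V i) R \<and> setdist_le D z (V j) R}"
        using cdu unfolding coarse_disjoint_union_def by blast
      then have "bdd_diam D (?B j)" using True i by (simp add: eq_commute)
      then show ?thesis using bdd_rbdd[of "?B j"] by blast
    next
      case False then show ?thesis by blast
    qed
  qed
  from choice[OF this] obtain Mf where Mf: "\<And>j. j < n \<and> j \<noteq> i \<longrightarrow> (\<forall>z\<in>?B j. d (fst z) x0 \<le> Mf j)"
    by blast
  define M where "M = (\<Sum>j<n. \<bar>Mf j\<bar>)"
  have "Mf j \<le> M" if "j < n" for j
  proof -
    have "\<bar>Mf j\<bar> \<le> M" unfolding M_def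
      by (rule member_le_sum) (use that in auto)
    then show ?thesis by simp
  qed
  then have Mb: "\<forall>j<n. j \<noteq> i \<longrightarrow> (\<forall>z\<in>?B j. d (fst z) x0 \<le> M)"
    using Mf by fastforce
  have big: "\<exists>z\<in>V i. d (fst z) x0 > K" for K
  proof (rule ccontr)
    assume "\<not> (\<exists>z\<in>V i. d (fst z) x0 > K)"
    then have "\<forall>z\<in>V i. d (fst z) x0 \<le> K" by (simp add: not_less)
    then show False using rbdd_bdd[OF ViZ] ub by blast
  qed
  have inU: "fst z \<in> {x\<in>X. sig x \<in> V i}" if "z \<in> V i" "d (fst z) x0 > M" for z
    using key[OF cdu i Mb that] that ViZ Z_mem by blast
  show ?thesis
  proof
    assume "bdd_diam d {x\<in>X. sig x \<in> V i}"
    then obtain C where C: "\<forall>x\<in>{x\<in>X. sig x \<in> V i}. \<forall>y\<in>{x\<in>X. sig x \<in> V i}. d x y \<le> C"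
      unfolding bdd_diam_def by blast
    obtain z1 where z1: "z1 \<in> V i" "d (fst z1) x0 > M" using big by blast
    have x1: "fst z1 \<in> {x\<in>X. sig x \<in> V i}" using inU z1 by blast
    obtain z2 where z2: "z2 \<in> V i" "d (fst z2) x0 > max M (C + d (fst z1) x0)" using big by blast
    have x2: "fst z2 \<in> {x\<in>X. sig x \<in> V i}" using inU z2 by simp
    have "d (fst z2) x0 \<le> d (fst z2) (fst z1) + d (fst z1) x0"
      using triangle x1 x2 x0 by blast
    then show False using C x1 x2 z2 by force
  qed
qed

lemma backward:
  assumes cdu: "coarse_disjoint_union Z D n V" and ub: "\<forall>i<n. \<not> bdd_diam D (V i)"
  shows "\<exists>U. coarse_disjoint_union X d n U \<and> (\<forall>i<n. \<not> bdd_diam d (U i))"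
proof -
  define U where "U i = {x\<in>X. sig x \<in> V i}" for i
  have "coarse_disjoint_union X d n U"
    unfolding coarse_disjoint_union_def
  proof (intro conjI allI impI)
    fix i j assume "i < n" "j < n" "i \<noteq> j"
    then have "V i \<inter> V j = {}" using cdu_disj[OF cdu] by blast
    then show "U i \<inter> U j = {}" unfolding U_def by blast
  next
    show "(\<Union>i<n. U i) = X"
    proof
      show "(\<Union>i<n. U i) \<subseteq> X" unfolding U_def by blast
      show "X \<subseteq> (\<Union>i<n. U i)"
      proof
        fix x assume "x \<in> X"
        then have "sig x \<in> Z" by (rule sig_Z)
        then have "sig x \<in> (\<Union>i<n. V i)" using cdu_cover[OF cdu] by simp
        then show "x \<in> (\<Union>i<n. U i)" using \<open>x \<in> X\<close> unfolding U_def by blast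
      qed
    qed
  next
    fix R :: real and i j assume R: "0 \<le> R" and ij: "i < n" "j < n" "i \<noteq> j"
    let ?S = "{z\<in>Z. setdist_le D z (V i) (2*R) \<and> setdist_le D z (V j) (2*R)}"
    have R2: "0 \<le> 2*R" using R by simp
    have bS: "bdd_diam D ?S" using cdu_bdd[OF cdu R2 ij] .
    have tr: "setdist_le D (sig x) (V k) (2*R)" if xX: "x \<in> X" and sdl: "setdist_le d x (U k) R" for x k
      unfolding setdist_le_def
    proof (intro allI impI)
      fix e :: real assume "0 < e"
      then have "0 < e/2" by simp
      then obtain u where u: "u \<in> U k" "d x u < R + e/2" using sdl unfolding setdist_le_def
        by blast
      then have "u \<in> X" "sig u \<in> V k" unfolding U_def by auto
      moreover have "D (sig x) (sig u) < 2*R + e" using sig_le[OF xX \<open>u \<in> X\<close>] u by linarith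
      ultimately show "\<exists>u\<in>V k. D (sig x) u < 2*R + e" by blast
    qed
    have "{x\<in>X. setdist_le d x (U i) R \<and> setdist_le d x (U j) R} \<subseteq> {x\<in>X. sig x \<in> ?S}"
      using tr sig_Z by blast
    then show "bdd_diam d {x\<in>X. setdist_le d x (U i) R \<and> setdist_le d x (U j) R}"
      using B2[OF bS] bdd_diam_mono by blast
  qed
  moreover have "\<forall>i<n. \<not> bdd_diam d (U i)" using U2[OF cdu] ub unfolding U_def by blast
  ultimately show ?thesis by blast
qed

lemma bdd_equiv: "bdd_diam D Z \<longleftrightarrow> bdd_diam d X"
proof
  assume "bdd_diam D Z"
  then have "bdd_diam d {x\<in>X. sig x \<in> Z}" by (rule B2)
  moreover have "{x\<in>X. sig x \<in> Z} = X" using sig_Z by blast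
  ultimately show "bdd_diam d X" by simp
next
  assume "bdd_diam d X"
  then have "bdd_diam D {z\<in>Z. fst z \<in> X}" by (rule B1) simp
  moreover have "{z\<in>Z. fst z \<in> X} = Z" using Z_mem by blast
  ultimately show "bdd_diam D Z" by simp
qed

lemma ends_eq: "ends Z D = ends X d"
proof -
  have "{enat n | n. \<exists>U. coarse_disjoint_union Z D n U \<and> (\<forall>i<n. \<not> bdd_diam D (U i))}
      = {enat n | n. \<exists>U. coarse_disjoint_union X d n U \<and> (\<forall>i<n. \<not> bdd_diam d (U i))}"
  proof -
    have "(\<exists>U. coarse_disjoint_union Z D n U \<and> (\<forall>i<n. \<not> bdd_diam D (U i))) \<longleftrightarrow>
          (\<exists>U. coarse_disjoint_union X d n U \<and> (\<forall>i<n. \<not> bdd_diam d (U i)))" for n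
    proof
      assume "\<exists>U. coarse_disjoint_union Z D n U \<and> (\<forall>i<n. \<not> bdd_diam D (U i))"
      then obtain U where "coarse_disjoint_union Z D n U" "\<forall>i<n. \<not> bdd_diam D (U i)" by blast
      then show "\<exists>U. coarse_disjoint_union X d n U \<and> (\<forall>i<n. \<not> bdd_diam d (U i))" by (rule backward)
    next
      assume "\<exists>U. coarse_disjoint_union X d n U \<and> (\<forall>i<n. \<not> bdd_diam d (U i))"
      then obtain U where "coarse_disjoint_union X d n U" "\<forall>i<n. \<not> bdd_diam d (U i)" by blast
      then show "\<exists>U. coarse_disjoint_union Z D n U \<and> (\<forall>i<n. \<not> bdd_diam D (U i))" by (rule forward)
    qed
    then show ?thesis by simp
  qed
  then show ?thesis unfolding ends_def using bdd_equiv by simp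
qed

end

theorem mainTheorem15:
  fixes X :: "'a set" and d :: "'a \<Rightarrow> 'a \<Rightarrow> real" and x0 :: 'a
  assumes "Metric_space X d" and "x0 \<in> X"
  shows "ends (asym_prod X d x0) (asym_dist d) = ends X d"
proof -
  interpret AP X d x0 using assms by (simp add: AP_def AP_axioms_def)
  show ?thesis by (rule ends_eq)
qed

end
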